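(* Let $\mathbb{Q}^*_+$ act on the ring $\mathcal{A}_f$ of finite adeles by multiplication via the diagonal embedding. For each $a=(a_p)_{p\in\mathcal{P}}\in\mathcal{A}_f$, the closure of the orbit $\mathbb{Q}^*_+a$ is $$\overline{\mathbb{Q}^*_+ a}=\{b\in\mathcal{A}_f : \text{for every } p\in\mathcal{P},\ a_p=0 \implies b_p=0\}.$$
   Context: $\mathcal{P}$ denotes the set of prime numbers; $\mathbb{Q}_p$, $\mathbb{Z}_p$ are the $p$-adic numbers and $p$-adic integers. $\mathcal{A}_f=\{(a_p)\in\prod_{p}\mathbb{Q}_p : a_p\in\mathbb{Z}_p \text{ for all but finitely many } p\}$ with componentwise operations and the restricted product topology, in which the sets $\prod_{p\in F}V_p\times\prod_{p\notin F}\mathbb{Z}_p$ ($F$ finite, $V_p$ a neighbourhood of $0$ in $\mathbb{Q}_p$) form a neighbourhood base at $0$. $\mathbb{Q}$ embeds diagonally in $\mathcal{A}_f$. *)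

theory Defs
  imports "HOL-Analysis.Analysis" "HOL-Computational_Algebra.Primes"
begin

definition pval :: "nat \<Rightarrow> rat \<Rightarrow> int" where
  "pval p q = (case quotient_of q of (a, b) \<Rightarrow>
      int (multiplicity (int p) a) - int (multiplicity (int p) b))"

definition pabs :: "nat \<Rightarrow> rat \<Rightarrow> real" where
  "pabs p q = (if q = 0 then 0 else real p powr (- real_of_int (pval p q)))"

definition pcauchy :: "nat \<Rightarrow> (nat \<Rightarrow> rat) \<Rightarrow> bool" where
  "pcauchy p X \<longleftrightarrow> (\<forall>e>0. \<exists>N. \<forall>m\<ge>N. \<forall>n\<ge>N. pabs p (X m - X n) < e)"

definition prel :: "nat \<Rightarrow> ((nat \<Rightarrow> rat) \<times> (nat \<Rightarrow> rat)) set" where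
  "prel p = {(X, Y). pcauchy p X \<and> pcauchy p Y \<and> (\<lambda>n. pabs p (X n - Y n)) \<longlonglongrightarrow> 0}"

type_synonym padic = "(nat \<Rightarrow> rat) set"

definition Qp :: "nat \<Rightarrow> padic set" where
  "Qp p = {X. pcauchy p X} // prel p"

definition pclass :: "nat \<Rightarrow> (nat \<Rightarrow> rat) \<Rightarrow> padic" where
  "pclass p X = prel p `` {X}"

definition prep :: "padic \<Rightarrow> nat \<Rightarrow> rat" where
  "prep x = (SOME X. X \<in> x)"

definition pzero :: "nat \<Rightarrow> padic" where
  "pzero p = pclass p (\<lambda>_. 0)"

definition pof_rat :: "nat \<Rightarrow> rat \<Rightarrow> padic" where
  "pof_rat p q = pclass p (\<lambda>_. q)"

definition padd :: "nat \<Rightarrow> padic \<Rightarrow> padic \<Rightarrow> padic" where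
  "padd p x y = pclass p (\<lambda>n. prep x n + prep y n)"

definition psub :: "nat \<Rightarrow> padic \<Rightarrow> padic \<Rightarrow> padic" where
  "psub p x y = pclass p (\<lambda>n. prep x n - prep y n)"

definition pmul :: "nat \<Rightarrow> padic \<Rightarrow> padic \<Rightarrow> padic" where
  "pmul p x y = pclass p (\<lambda>n. prep x n * prep y n)"

definition pnorm :: "nat \<Rightarrow> padic \<Rightarrow> real" where
  "pnorm p x = lim (\<lambda>n. pabs p (prep x n))"

definition Zp :: "nat \<Rightarrow> padic set" where
  "Zp p = {x \<in> Qp p. pnorm p x \<le> 1}"

definition pnhd0 :: "nat \<Rightarrow> padic set \<Rightarrow> bool" where
  "pnhd0 p V \<longleftrightarrow> (\<exists>e>0. {x \<in> Qp p. pnorm p x < e} \<subseteq> V)"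

text \<open>An adele is a family indexed by naturals; only prime indices carry data,
  non-prime indices are fixed to the dummy value {}.\<close>
definition finite_adeles :: "(nat \<Rightarrow> padic) set" where
  "finite_adeles = {a. (\<forall>p. prime p \<longrightarrow> a p \<in> Qp p) \<and> (\<forall>p. \<not> prime p \<longrightarrow> a p = {})
                     \<and> finite {p. prime p \<and> a p \<notin> Zp p}}"

definition adele_sub :: "(nat \<Rightarrow> padic) \<Rightarrow> (nat \<Rightarrow> padic) \<Rightarrow> (nat \<Rightarrow> padic)" where
  "adele_sub a b = (\<lambda>p. if prime p then psub p (a p) (b p) else {})"

definition adele_scale :: "rat \<Rightarrow> (nat \<Rightarrow> padic) \<Rightarrow> (nat \<Rightarrow> padic)" where
  "adele_scale q a = (\<lambda>p. if prime p then pmul p (pof_rat p q) (a p) else {})"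

definition adele_nhd0 :: "(nat \<Rightarrow> padic) set \<Rightarrow> bool" where
  "adele_nhd0 U \<longleftrightarrow> (\<exists>F V. finite F \<and> (\<forall>p\<in>F. prime p \<and> pnhd0 p (V p)) \<and>
      U = {x \<in> finite_adeles. \<forall>p. prime p \<longrightarrow> x p \<in> (if p \<in> F then V p else Zp p)})"

text \<open>Restricted product topology: W open iff it contains a translate x + U of a
  basic neighbourhood U of 0 around each of its points x.\<close>
definition adele_topology :: "(nat \<Rightarrow> padic) topology" where
  "adele_topology = topology (\<lambda>W. W \<subseteq> finite_adeles \<and>
      (\<forall>x\<in>W. \<exists>U. adele_nhd0 U \<and> {y \<in> finite_adeles. adele_sub y x \<in> U} \<subseteq> W))"

end

theory Submission
  imports Defs "HOL-Number_Theory.Cong"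
begin

lemma pval_div:
  assumes p: "prime p" and a: "a \<noteq> 0" and b: "b \<noteq> 0"
  shows "pval p (of_int a / of_int b) = int (multiplicity (int p) a) - int (multiplicity (int p) b)"
proof -
  obtain a' b' where q: "quotient_of (of_int a / of_int b) = (a', b')" by (cases "quotient_of (of_int a / of_int b)") auto
  have b'pos: "b' > 0" using quotient_of_denom_pos[OF q] .
  have eq: "(of_int a / of_int b :: rat) = of_int a' / of_int b'" using quotient_of_div[OF q] .
  have "of_int (a' * b) = (of_int (a * b') :: rat)"
    using eq b b'pos by (simp add: field_simps)
  hence e2: "a' * b = a * b'" by (simp only: of_int_eq_iff)
  have a': "a' \<noteq> 0" using e2 a b b'pos by auto
  have pe: "prime_elem (int p)" using p by simp
  have "multiplicity (int p) (a' * b) = multiplicity (int p) (a * b')" using e2 by simp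
  hence "multiplicity (int p) a' + multiplicity (int p) b = multiplicity (int p) a + multiplicity (int p) b'"
    using prime_elem_multiplicity_mult_distrib[OF pe] a a' b b'pos by (metis less_irrefl)
  thus ?thesis unfolding pval_def q by simp
qed

lemma rat_repr: fixes x :: rat obtains a b :: int where "b > 0" "x = of_int a / of_int b"
proof -
  obtain a b where q: "quotient_of x = (a, b)" by (cases "quotient_of x") auto
  show ?thesis using that quotient_of_denom_pos[OF q] quotient_of_div[OF q] by auto
qed

lemma pabs_div:
  assumes p: "prime p" and a: "a \<noteq> 0" and b: "b \<noteq> 0"
  shows "pabs p (of_int a / of_int b) = real p powr (real (multiplicity (int p) b) - real (multiplicity (int p) a))"
  using pval_div[OF assms] a b unfolding pabs_def by simp

lemma pabs_nonneg: "pabs p x \<ge> 0" unfolding pabs_def by simp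

lemma pabs_0[simp]: "pabs p 0 = 0" unfolding pabs_def by simp

lemma pabs_pos: "prime p \<Longrightarrow> x \<noteq> 0 \<Longrightarrow> pabs p x > 0"
  unfolding pabs_def using prime_gt_0_nat by auto

lemma pabs_eq_0_iff: "prime p \<Longrightarrow> pabs p x = 0 \<longleftrightarrow> x = 0"
  using pabs_pos[of p x] by (cases "x = 0") auto

lemma pabs_mult:
  assumes p: "prime p"
  shows "pabs p (x * y) = pabs p x * pabs p y"
proof (cases "x = 0 \<or> y = 0")
  case True thus ?thesis by auto
next
  case False
  obtain a b where ab: "b > 0" "x = of_int a / of_int b" by (rule rat_repr)
  obtain c d where cd: "d > 0" "y = of_int c / of_int d" by (rule rat_repr)
  have a: "a \<noteq> 0" and c: "c \<noteq> 0" using False ab cd by auto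
  have xy: "x * y = of_int (a*c) / of_int (b*d)" using ab cd by simp
  have pe: "prime_elem (int p)" using p by simp
  have m1: "multiplicity (int p) (a*c) = multiplicity (int p) a + multiplicity (int p) c"
    by (rule prime_elem_multiplicity_mult_distrib[OF pe a c])
  have m2: "multiplicity (int p) (b*d) = multiplicity (int p) b + multiplicity (int p) d"
    using prime_elem_multiplicity_mult_distrib[OF pe] ab cd by auto
  have "pabs p (x*y) = real p powr (real (multiplicity (int p) (b*d)) - real (multiplicity (int p) (a*c)))"
    unfolding xy using ab cd a c by (intro pabs_div p) auto
  also have "\<dots> = real p powr (real (multiplicity (int p) b) - real (multiplicity (int p) a)) *
     real p powr (real (multiplicity (int p) d) - real (multiplicity (int p) c))"
    unfolding m1 m2 by (simp add: powr_add[symmetric] algebra_simps)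
  also have "\<dots> = pabs p x * pabs p y"
    using ab cd a c by (simp add: pabs_div p)
  finally show ?thesis .
qed

lemma mult_sum_ge:
  assumes "u + v \<noteq> (0::int)" and nu: "\<not> is_unit q"
  shows "multiplicity q (u + v) \<ge> min (multiplicity q u) (multiplicity q v)"
proof -
  let ?k = "min (multiplicity q u) (multiplicity q v)"
  have "q ^ ?k dvd u" by (rule multiplicity_dvd') simp
  moreover have "q ^ ?k dvd v" by (rule multiplicity_dvd') simp
  ultimately have "q ^ ?k dvd u + v" by simp
  thus ?thesis by (rule multiplicity_geI[OF assms(1) nu])
qed

lemma pabs_ultra:
  assumes p: "prime p"
  shows "pabs p (x + y) \<le> max (pabs p x) (pabs p y)"
proof (cases "x = 0 \<or> y = 0 \<or> x + y = 0")
  case True thus ?thesis using pabs_nonneg[of p x] pabs_nonneg[of p y] by (auto simp: le_max_iff_disj)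
next
  case False
  obtain a b where ab: "b > 0" "x = of_int a / of_int b" by (rule rat_repr)
  obtain c d where cd: "d > 0" "y = of_int c / of_int d" by (rule rat_repr)
  have a: "a \<noteq> 0" and c: "c \<noteq> 0" using False ab cd by auto
  have xy: "x + y = of_int (a*d + c*b) / of_int (b*d)" using ab cd by (simp add: field_simps)
  have s: "a*d + c*b \<noteq> 0"
  proof
    assume "a*d + c*b = 0"
    hence "(of_int (a*d + c*b) :: rat) = 0" by simp
    thus False using False xy by simp
  qed
  have x': "x = of_int (a*d) / of_int (b*d)" using ab cd by simp
  have y': "y = of_int (c*b) / of_int (b*d)" using ab cd by simp
  have bd: "b*d \<noteq> 0" using ab cd by simp
  have ad: "a*d \<noteq> 0" "c*b \<noteq> 0" using a c ab cd by auto
  let ?m = "\<lambda>z. real (multiplicity (int p) z)"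
  have "?m (a*d + c*b) \<ge> min (?m (a*d)) (?m (c*b))" using mult_sum_ge[OF s, of "int p"] p prime_gt_1_nat[of p] by (simp add: prime_elem_not_unit min_def split: if_splits)
  hence "?m (b*d) - ?m (a*d + c*b) \<le> max (?m (b*d) - ?m (a*d)) (?m (b*d) - ?m (c*b))" by linarith
  hence "real p powr (?m (b*d) - ?m (a*d + c*b)) \<le> real p powr (max (?m (b*d) - ?m (a*d)) (?m (b*d) - ?m (c*b)))"
    using p prime_gt_1_nat[of p] by (intro powr_mono) auto
  also have "\<dots> = max (real p powr (?m (b*d) - ?m (a*d))) (real p powr (?m (b*d) - ?m (c*b)))"
    using p prime_gt_1_nat by (simp add: max_def)
  finally show ?thesis
    using pabs_div[OF p s bd] pabs_div[OF p ad(1) bd] pabs_div[OF p ad(2) bd] xy x' y' by simp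
qed

lemma pabs_minus: "prime p \<Longrightarrow> pabs p (- x) = pabs p x"
proof -
  assume p: "prime p"
  have "pabs p (-1) = 1"
    using pabs_div[OF p, of "-1" 1] p by (simp add: multiplicity_unit_right prime_gt_0_nat)
  thus ?thesis using pabs_mult[OF p, of "-1" x] by simp
qed

lemma pabs_commute: "prime p \<Longrightarrow> pabs p (x - y) = pabs p (y - x)"
  using pabs_minus[of p "x - y"] by simp

lemma pabs_tri: "prime p \<Longrightarrow> pabs p (x + y) \<le> pabs p x + pabs p y"
  using pabs_ultra[of p x y] pabs_nonneg[of p] by (smt (verit))

lemma pabs_ultra_diff: "prime p \<Longrightarrow> pabs p (x - z) \<le> max (pabs p (x - y)) (pabs p (y - z))"
  using pabs_ultra[of p "x - y" "y - z"] by simp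

lemma pabs_rev_tri: "prime p \<Longrightarrow> \<bar>pabs p x - pabs p y\<bar> \<le> pabs p (x - y)"
  using pabs_tri[of p "x - y" y] pabs_tri[of p "y - x" x] pabs_commute[of p x y] by auto

lemma pabs_int_dvd:
  assumes p: "prime p" and d: "int p ^ N dvd n"
  shows "pabs p (of_int n) \<le> real p powr (- real N)"
proof (cases "n = 0")
  case True thus ?thesis by simp
next
  case False
  have "N \<le> multiplicity (int p) n" using d multiplicity_geI[OF False, of "int p" N] p prime_elem_not_unit[of "int p"] by simp
  moreover have "pabs p (of_int n) = real p powr (- real (multiplicity (int p) n))"
    using pabs_div[OF p False, of 1] by simp
  ultimately show ?thesis using p prime_gt_1_nat by (simp add: powr_mono)
qed

lemma pabs_int_le1:
  assumes p: "prime p" shows "pabs p (of_int n) \<le> 1"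
  using pabs_int_dvd[OF p, of 0 n] p by (simp add: prime_gt_0_nat)

lemma pcauchy_const: "pcauchy p (\<lambda>_. c)"
  unfolding pcauchy_def by simp

lemma pcauchy_diff:
  assumes p: "prime p" and X: "pcauchy p X" and Y: "pcauchy p Y"
  shows "pcauchy p (\<lambda>n. X n - Y n)"
  unfolding pcauchy_def
proof (intro allI impI)
  fix e :: real assume e: "e > 0"
  obtain N1 where N1: "\<forall>m\<ge>N1. \<forall>n\<ge>N1. pabs p (X m - X n) < e/2" using X e unfolding pcauchy_def by (meson half_gt_zero)
  obtain N2 where N2: "\<forall>m\<ge>N2. \<forall>n\<ge>N2. pabs p (Y m - Y n) < e/2" using Y e unfolding pcauchy_def by (meson half_gt_zero)
  show "\<exists>N. \<forall>m\<ge>N. \<forall>n\<ge>N. pabs p (X m - Y m - (X n - Y n)) < e"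
  proof (intro exI[of _ "max N1 N2"] allI impI)
    fix m n assume "max N1 N2 \<le> m" "max N1 N2 \<le> n"
    hence a: "pabs p (X m - X n) < e/2" "pabs p (Y m - Y n) < e/2" using N1 N2 by auto
    have eq: "X m - Y m - (X n - Y n) = (X m - X n) + (Y n - Y m)" by simp
    have "pabs p (X m - Y m - (X n - Y n)) \<le> pabs p (X m - X n) + pabs p (Y n - Y m)"
      unfolding eq by (rule pabs_tri[OF p])
    hence "pabs p (X m - Y m - (X n - Y n)) \<le> pabs p (X m - X n) + pabs p (Y m - Y n)"
      using pabs_commute[OF p, of "Y n" "Y m"] by simp
    thus "pabs p (X m - Y m - (X n - Y n)) < e" using a by simp
  qed
qed

lemma pcauchy_scale:
  assumes p: "prime p" and X: "pcauchy p X"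
  shows "pcauchy p (\<lambda>n. c * X n)"
proof (cases "c = 0")
  case True thus ?thesis using pcauchy_const[of p 0] by simp
next
  case False
  have cp: "pabs p c > 0" using pabs_pos[OF p False] .
  show ?thesis unfolding pcauchy_def
  proof (intro allI impI)
    fix e :: real assume e: "e > 0"
    obtain N where N: "\<forall>m\<ge>N. \<forall>n\<ge>N. pabs p (X m - X n) < e / pabs p c"
      using X e cp unfolding pcauchy_def by (meson divide_pos_pos)
    show "\<exists>N. \<forall>m\<ge>N. \<forall>n\<ge>N. pabs p (c * X m - c * X n) < e"
    proof (intro exI[of _ N] allI impI)
      fix m n assume "N \<le> m" "N \<le> n"
      hence "pabs p (X m - X n) < e / pabs p c" using N by auto
      hence "pabs p c * pabs p (X m - X n) < e" using cp by (simp add: field_simps)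
      moreover have "c * X m - c * X n = c * (X m - X n)" by (simp add: algebra_simps)
      ultimately show "pabs p (c * X m - c * X n) < e" by (simp add: pabs_mult[OF p])
    qed
  qed
qed

lemma pcauchy_close:
  assumes p: "prime p" and Y: "pcauchy p Y" and c: "(\<lambda>n. pabs p (W n - Y n)) \<longlonglongrightarrow> 0"
  shows "pcauchy p W"
  unfolding pcauchy_def
proof (intro allI impI)
  fix e :: real assume e: "e > 0"
  obtain N1 where N1: "\<forall>m\<ge>N1. \<forall>n\<ge>N1. pabs p (Y m - Y n) < e" using Y e unfolding pcauchy_def by meson
  from c e have "eventually (\<lambda>n. pabs p (W n - Y n) < e) sequentially"
    by (auto simp: tendsto_iff dist_real_def pabs_nonneg)
  then obtain N2 where N2: "\<forall>n\<ge>N2. pabs p (W n - Y n) < e" by (auto simp: eventually_sequentially)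
  show "\<exists>N. \<forall>m\<ge>N. \<forall>n\<ge>N. pabs p (W m - W n) < e"
  proof (intro exI[of _ "max N1 N2"] allI impI)
    fix m n assume "max N1 N2 \<le> m" "max N1 N2 \<le> n"
    hence a: "pabs p (W m - Y m) < e" "pabs p (Y m - Y n) < e" "pabs p (Y n - W n) < e"
      using N1 N2 pabs_commute[OF p, of "Y n" "W n"] by auto
    have h1: "pabs p (W m - W n) \<le> max (pabs p (W m - Y m)) (pabs p (Y m - W n))" by (rule pabs_ultra_diff[OF p])
    have h2: "pabs p (Y m - W n) \<le> max (pabs p (Y m - Y n)) (pabs p (Y n - W n))" by (rule pabs_ultra_diff[OF p])
    have "max (pabs p (Y m - Y n)) (pabs p (Y n - W n)) < e" using a by simp
    hence "pabs p (Y m - W n) < e" using h2 by linarith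
    hence "max (pabs p (W m - Y m)) (pabs p (Y m - W n)) < e" using a by simp
    thus "pabs p (W m - W n) < e" using h1 by linarith
  qed
qed

lemma pcauchy_bounded:
  assumes p: "prime p" and X: "pcauchy p X"
  obtains B where "B > 0" "\<And>n. pabs p (X n) \<le> B"
proof -
  obtain N where N: "\<forall>m\<ge>N. \<forall>n\<ge>N. pabs p (X m - X n) < 1" using X unfolding pcauchy_def
    by (metis zero_less_one)
  define B where "B = 1 + (\<Sum>k\<le>N. pabs p (X k))"
  have Bge: "B \<ge> 1" unfolding B_def by (simp add: pabs_nonneg sum_nonneg)
  have le: "pabs p (X k) \<le> B - 1" if "k \<le> N" for k
    unfolding B_def using that member_le_sum[of k "{..N}" "\<lambda>k. pabs p (X k)"] by (simp add: pabs_nonneg)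
  have "pabs p (X n) \<le> B" for n
  proof (cases "n \<le> N")
    case True thus ?thesis using le[of n] by linarith
  next
    case False
    have "pabs p (X n) \<le> pabs p (X n - X N) + pabs p (X N)" using pabs_tri[OF p, of "X n - X N" "X N"] by simp
    also have "\<dots> \<le> 1 + (B - 1)"
    proof -
      have "pabs p (X n - X N) < 1" using N False by simp
      moreover have "pabs p (X N) \<le> B - 1" using le[of N] by simp
      ultimately show ?thesis by linarith
    qed
    finally show ?thesis by simp
  qed
  thus ?thesis using that[of B] Bge by simp
qed

lemma pcauchy_conv:
  assumes p: "prime p" and X: "pcauchy p X"
  shows "convergent (\<lambda>n. pabs p (X n))"
proof -
  have "Cauchy (\<lambda>n. pabs p (X n))"
  proof (rule CauchyI)
    fix e :: real assume e: "e > 0"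
    obtain N where N: "\<forall>m\<ge>N. \<forall>n\<ge>N. pabs p (X m - X n) < e" using X e unfolding pcauchy_def by meson
    show "\<exists>M. \<forall>m\<ge>M. \<forall>n\<ge>M. norm (pabs p (X m) - pabs p (X n)) < e"
    proof (intro exI[of _ N] allI impI)
      fix m n assume "N \<le> m" "N \<le> n"
      thus "norm (pabs p (X m) - pabs p (X n)) < e" using N pabs_rev_tri[OF p, of "X m" "X n"] by force
    qed
  qed
  thus ?thesis by (simp add: Cauchy_convergent_iff)
qed

lemma prel_equiv: "prime p \<Longrightarrow> equiv {X. pcauchy p X} (prel p)"
proof -
  assume p: "prime p"
  show ?thesis
  proof (rule equivI)
    show "refl_on {X. pcauchy p X} (prel p)" by (rule refl_onI) (auto simp: prel_def)
    show "sym (prel p)" unfolding sym_def prel_def using pabs_commute[OF p] by auto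
    show "prel p \<subseteq> {X. pcauchy p X} \<times> {X. pcauchy p X}" by (auto simp: prel_def)
    show "trans (prel p)" unfolding trans_def prel_def
    proof (clarsimp)
      fix X Y Z assume a: "pcauchy p X" "pcauchy p Y" "pcauchy p Z"
        "(\<lambda>n. pabs p (X n - Y n)) \<longlonglongrightarrow> 0" "(\<lambda>n. pabs p (Y n - Z n)) \<longlonglongrightarrow> 0"
      have "(\<lambda>n. pabs p (X n - Y n) + pabs p (Y n - Z n)) \<longlonglongrightarrow> 0"
        using tendsto_add[OF a(4) a(5)] by simp
      thus "(\<lambda>n. pabs p (X n - Z n)) \<longlonglongrightarrow> 0"
      proof (rule Lim_null_comparison[rotated], intro always_eventually allI)
        fix n
        show "norm (pabs p (X n - Z n)) \<le> pabs p (X n - Y n) + pabs p (Y n - Z n)"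
          using pabs_tri[OF p, of "X n - Y n" "Y n - Z n"] pabs_nonneg[of p] by simp
      qed
    qed
  qed
qed

lemma prel_diff:
  assumes p: "prime p" and "(X, X') \<in> prel p" "(Y, Y') \<in> prel p"
  shows "((\<lambda>n. X n - Y n), (\<lambda>n. X' n - Y' n)) \<in> prel p"
proof -
  have c: "pcauchy p X" "pcauchy p X'" "pcauchy p Y" "pcauchy p Y'"
    and l: "(\<lambda>n. pabs p (X n - X' n)) \<longlonglongrightarrow> 0" "(\<lambda>n. pabs p (Y n - Y' n)) \<longlonglongrightarrow> 0"
    using assms unfolding prel_def by auto
  have "(\<lambda>n. pabs p (X n - X' n) + pabs p (Y n - Y' n)) \<longlonglongrightarrow> 0"
    using tendsto_add[OF l] by simp
  hence "(\<lambda>n. pabs p ((X n - Y n) - (X' n - Y' n))) \<longlonglongrightarrow> 0"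
  proof (rule Lim_null_comparison[rotated], intro always_eventually allI)
    fix n
    have eq: "(X n - Y n) - (X' n - Y' n) = (X n - X' n) + (Y' n - Y n)" by simp
    have "pabs p ((X n - Y n) - (X' n - Y' n)) \<le> pabs p (X n - X' n) + pabs p (Y' n - Y n)"
      unfolding eq by (rule pabs_tri[OF p])
    thus "norm (pabs p ((X n - Y n) - (X' n - Y' n))) \<le> pabs p (X n - X' n) + pabs p (Y n - Y' n)"
      using pabs_commute[OF p, of "Y' n" "Y n"] pabs_nonneg[of p] by simp
  qed
  thus ?thesis unfolding prel_def using pcauchy_diff[OF p] c by auto
qed

lemma prel_mul_const:
  assumes p: "prime p" and Z: "(Z, (\<lambda>_. c)) \<in> prel p" and X: "pcauchy p X"
  shows "((\<lambda>n. Z n * X n), (\<lambda>n. c * X n)) \<in> prel p"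
proof -
  obtain B where B: "B > 0" "\<And>n. pabs p (X n) \<le> B" using pcauchy_bounded[OF p X] by blast
  have l: "(\<lambda>n. pabs p (Z n - c)) \<longlonglongrightarrow> 0" using Z unfolding prel_def by auto
  have "(\<lambda>n. B * pabs p (Z n - c)) \<longlonglongrightarrow> 0" using tendsto_mult_right_zero[OF l] by simp
  hence l2: "(\<lambda>n. pabs p (Z n * X n - c * X n)) \<longlonglongrightarrow> 0"
  proof (rule Lim_null_comparison[rotated], intro always_eventually allI)
    fix n
    have "Z n * X n - c * X n = (Z n - c) * X n" by (simp add: algebra_simps)
    hence "pabs p (Z n * X n - c * X n) = pabs p (Z n - c) * pabs p (X n)" by (simp add: pabs_mult[OF p])
    also have "\<dots> \<le> B * pabs p (Z n - c)" using B(2)[of n] pabs_nonneg[of p "Z n - c"]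
      by (metis mult.commute mult_left_mono)
    finally show "norm (pabs p (Z n * X n - c * X n)) \<le> B * pabs p (Z n - c)" using pabs_nonneg[of p] by simp
  qed
  have cX: "pcauchy p (\<lambda>n. c * X n)" by (rule pcauchy_scale[OF p X])
  show ?thesis unfolding prel_def using l2 cX pcauchy_close[OF p cX l2] by auto
qed

lemma Qp_rep:
  assumes p: "prime p" and x: "x \<in> Qp p"
  shows "pcauchy p (prep x)" "pclass p (prep x) = x"
proof -
  have eq: "equiv {X. pcauchy p X} (prel p)" by (rule prel_equiv[OF p])
  obtain X where X: "pcauchy p X" "x = prel p `` {X}" using x unfolding Qp_def by (auto elim!: quotientE)
  have "X \<in> x" using X by (simp add: prel_def)
  hence "prep x \<in> x" unfolding prep_def by (metis someI)
  hence r: "(X, prep x) \<in> prel p" using X by simp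
  thus "pcauchy p (prep x)" unfolding prel_def by simp
  have e: "prel p `` {X} = prel p `` {prep x}" by (rule equiv_class_eq[OF eq r])
  show "pclass p (prep x) = x" unfolding pclass_def using e X(2) by metis
qed

lemma pclass_in:
  assumes p: "prime p" and X: "pcauchy p X"
  shows "pclass p X \<in> Qp p" "(X, prep (pclass p X)) \<in> prel p"
proof -
  have eq: "equiv {X. pcauchy p X} (prel p)" by (rule prel_equiv[OF p])
  show "pclass p X \<in> Qp p" unfolding Qp_def pclass_def using X by (auto intro: quotientI)
  have "X \<in> pclass p X" unfolding pclass_def using X by (simp add: prel_def)
  hence "prep (pclass p X) \<in> pclass p X" unfolding prep_def by (metis someI)
  thus "(X, prep (pclass p X)) \<in> prel p" unfolding pclass_def by simp
qed

lemma pclass_eq_iff: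
  assumes p: "prime p" and X: "pcauchy p X" and Y: "pcauchy p Y"
  shows "pclass p X = pclass p Y \<longleftrightarrow> (X, Y) \<in> prel p"
  unfolding pclass_def using eq_equiv_class_iff[OF prel_equiv[OF p]] X Y by simp

lemma prel_sym: "prime p \<Longrightarrow> (X, Y) \<in> prel p \<Longrightarrow> (Y, X) \<in> prel p"
  using prel_equiv[of p] unfolding equiv_def sym_def by blast

lemma prel_refl: "pcauchy p X \<Longrightarrow> (X, X) \<in> prel p"
  unfolding prel_def by simp

lemma prel_lim:
  assumes p: "prime p" and r: "(X, Z) \<in> prel p" and L: "(\<lambda>n. pabs p (X n)) \<longlonglongrightarrow> L"
  shows "(\<lambda>n. pabs p (Z n)) \<longlonglongrightarrow> L"
proof -
  have l: "(\<lambda>n. pabs p (X n - Z n)) \<longlonglongrightarrow> 0" using r unfolding prel_def by simp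
  have "(\<lambda>n. pabs p (Z n) - pabs p (X n)) \<longlonglongrightarrow> 0"
  proof (rule Lim_null_comparison[OF _ l], intro always_eventually allI)
    fix n show "norm (pabs p (Z n) - pabs p (X n)) \<le> pabs p (X n - Z n)"
      using pabs_rev_tri[OF p, of "X n" "Z n"] by simp
  qed
  from tendsto_add[OF this L] show ?thesis by simp
qed

lemma pnorm_pclass:
  assumes p: "prime p" and X: "pcauchy p X"
  shows "(\<lambda>n. pabs p (X n)) \<longlonglongrightarrow> pnorm p (pclass p X)"
proof -
  obtain L where L: "(\<lambda>n. pabs p (X n)) \<longlonglongrightarrow> L" using pcauchy_conv[OF p X] by (auto simp: convergent_def)
  have "(\<lambda>n. pabs p (prep (pclass p X) n)) \<longlonglongrightarrow> L" by (rule prel_lim[OF p pclass_in(2)[OF p X] L])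
  hence "pnorm p (pclass p X) = L" unfolding pnorm_def by (rule limI)
  thus ?thesis using L by simp
qed

lemma pnorm_Qp:
  assumes p: "prime p" and x: "x \<in> Qp p"
  shows "(\<lambda>n. pabs p (prep x n)) \<longlonglongrightarrow> pnorm p x"
  using pnorm_pclass[OF p Qp_rep(1)[OF p x]] Qp_rep(2)[OF p x] by simp

lemma pnorm_nonneg: "prime p \<Longrightarrow> x \<in> Qp p \<Longrightarrow> pnorm p x \<ge> 0"
  using pnorm_Qp LIMSEQ_le_const pabs_nonneg by metis

lemma pclass_zero_iff:
  assumes p: "prime p" and X: "pcauchy p X"
  shows "pclass p X = pzero p \<longleftrightarrow> (\<lambda>n. pabs p (X n)) \<longlonglongrightarrow> 0"
  unfolding pzero_def using pclass_eq_iff[OF p X pcauchy_const[of p 0]] X pcauchy_const[of p 0]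
  by (simp add: prel_def)

lemma pclass_zero_iff_norm:
  assumes p: "prime p" and X: "pcauchy p X"
  shows "pclass p X = pzero p \<longleftrightarrow> pnorm p (pclass p X) = 0"
  using pclass_zero_iff[OF p X] pnorm_pclass[OF p X] LIMSEQ_unique by metis

lemma Qp_zero_iff:
  assumes p: "prime p" and x: "x \<in> Qp p"
  shows "x = pzero p \<longleftrightarrow> (\<lambda>n. pabs p (prep x n)) \<longlonglongrightarrow> 0"
  using pclass_zero_iff[OF p Qp_rep(1)[OF p x]] Qp_rep(2)[OF p x] by simp

lemma pmul_pof_rat:
  assumes p: "prime p" and x: "x \<in> Qp p"
  shows "pmul p (pof_rat p q) x = pclass p (\<lambda>n. q * prep x n)"
proof -
  have Z: "(prep (pof_rat p q), (\<lambda>_. q)) \<in> prel p"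
    using prel_sym[OF p pclass_in(2)[OF p pcauchy_const[of p q]]] unfolding pof_rat_def .
  have r: "((\<lambda>n. prep (pof_rat p q) n * prep x n), (\<lambda>n. q * prep x n)) \<in> prel p"
    by (rule prel_mul_const[OF p Z Qp_rep(1)[OF p x]])
  hence "pclass p (\<lambda>n. prep (pof_rat p q) n * prep x n) = pclass p (\<lambda>n. q * prep x n)"
    using pclass_eq_iff[OF p] unfolding prel_def by auto
  thus ?thesis unfolding pmul_def .
qed

lemma psub_pclass:
  assumes p: "prime p" and A: "pcauchy p A" and y: "y \<in> Qp p"
  shows "psub p (pclass p A) y = pclass p (\<lambda>n. A n - prep y n)"
proof -
  have r1: "(prep (pclass p A), A) \<in> prel p" using prel_sym[OF p pclass_in(2)[OF p A]] .
  have r2: "(prep y, prep y) \<in> prel p" using prel_refl[OF Qp_rep(1)[OF p y]] .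
  have "((\<lambda>n. prep (pclass p A) n - prep y n), (\<lambda>n. A n - prep y n)) \<in> prel p"
    by (rule prel_diff[OF p r1 r2])
  hence "pclass p (\<lambda>n. prep (pclass p A) n - prep y n) = pclass p (\<lambda>n. A n - prep y n)"
    using pclass_eq_iff[OF p] unfolding prel_def by auto
  thus ?thesis unfolding psub_def .
qed

lemma psub_in: "prime p \<Longrightarrow> x \<in> Qp p \<Longrightarrow> y \<in> Qp p \<Longrightarrow> psub p x y \<in> Qp p"
  unfolding psub_def by (intro pclass_in(1) pcauchy_diff Qp_rep(1)) auto

lemma pscale_in: "prime p \<Longrightarrow> x \<in> Qp p \<Longrightarrow> pmul p (pof_rat p q) x \<in> Qp p"
  by (simp add: pmul_pof_rat pclass_in(1) pcauchy_scale Qp_rep(1))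

lemma decomp_primes:
  assumes fin: "finite S" and pr: "\<forall>p\<in>S. prime p" and d: "(d::int) > 0"
  shows "\<exists>u w. d = u * w \<and> u > 0 \<and> w > 0 \<and> (\<forall>p\<in>S. \<not> int p dvd w) \<and>
     (\<forall>l. prime l \<and> l \<notin> S \<longrightarrow> \<not> int l dvd u)"
  using fin pr
proof (induction S rule: finite_induct)
  case empty
  show ?case
  proof (rule exI[of _ 1], rule exI[of _ d])
  qed (use d in \<open>auto simp: prime_gt_1_nat\<close>)
next
  case (insert p S)
  have "\<forall>p\<in>S. prime p" using insert.prems by simp
  then obtain u w where uw: "d = u * w" "u > 0" "w > 0" "\<forall>p\<in>S. \<not> int p dvd w"
     "\<forall>l. prime l \<and> l \<notin> S \<longrightarrow> \<not> int l dvd u" using insert.IH by blast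
  have pp: "prime p" using insert by auto
  have pnu: "\<not> is_unit (int p)" using pp prime_elem_not_unit[of "int p"] by simp
  obtain w' where w': "w = int p ^ multiplicity (int p) w * w'" "\<not> int p dvd w'"
    using multiplicity_decompose'[of w "int p"] uw(3) pnu by auto
  let ?k = "multiplicity (int p) w"
  have ppos: "int p ^ ?k > 0" using pp prime_gt_0_nat by simp
  have w'pos: "w' > 0" using uw(3) w'(1) ppos by (metis zero_less_mult_pos)
  show ?case
  proof (rule exI[of _ "u * int p ^ ?k"], rule exI[of _ w'], intro conjI)
    show "d = u * int p ^ ?k * w'" using uw(1) w'(1) by (simp add: mult.assoc)
    show "u * int p ^ ?k > 0" using uw(2) ppos by simp
    show "w' > 0" by fact
    show "\<forall>q\<in>insert p S. \<not> int q dvd w'"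
    proof
      fix q assume q: "q \<in> insert p S"
      show "\<not> int q dvd w'"
      proof (cases "q = p")
        case True thus ?thesis using w'(2) by simp
      next
        case False
        hence "q \<in> S" using q by simp
        hence "\<not> int q dvd w" using uw(4) by simp
        moreover have "int q dvd w' \<Longrightarrow> int q dvd w" by (subst w'(1)) (rule dvd_mult)
        ultimately show ?thesis by blast
      qed
    qed
    show "\<forall>l. prime l \<and> l \<notin> insert p S \<longrightarrow> \<not> int l dvd u * int p ^ ?k"
    proof (intro allI impI notI)
      fix l assume l: "prime l \<and> l \<notin> insert p S" and dv: "int l dvd u * int p ^ ?k"
      have pl: "prime (int l)" using l by simp
      have "int l dvd u \<or> int l dvd int p ^ ?k" using dv prime_dvd_mult_iff[OF pl] by simp
      moreover have "\<not> int l dvd u" using uw(5) l by simp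
      ultimately have "int l dvd int p ^ ?k" by simp
      hence "int l dvd int p" using prime_dvd_power[OF pl] by blast
      hence "l dvd p" by simp
      hence "l = p" using primes_dvd_imp_eq[of l p] l pp by simp
      thus False using l by simp
    qed
  qed
qed

lemma exists_N:
  assumes fin: "finite S" and pr: "\<forall>p\<in>S. prime p" and dp: "\<forall>p\<in>S. \<delta> p > 0"
  shows "\<exists>N. \<forall>p\<in>S. real p powr (real (k p) - real N) < \<delta> p"
proof -
  have "\<forall>p\<in>S. eventually (\<lambda>N. real p powr (real (k p) - real N) < \<delta> p) sequentially"
  proof
    fix p assume p: "p \<in> S"
    have p1: "real p > 1" using pr p prime_gt_1_nat by auto
    have "(\<lambda>N. inverse (real p ^ N)) \<longlonglongrightarrow> 0" by (rule LIMSEQ_inverse_realpow_zero[OF p1])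
    hence "(\<lambda>N. real p powr real (k p) * inverse (real p ^ N)) \<longlonglongrightarrow> 0"
      by (rule tendsto_mult_right_zero)
    moreover have "real p powr (real (k p) - real N) = real p powr real (k p) * inverse (real p ^ N)" for N
      using p1 by (simp add: powr_diff powr_realpow divide_inverse)
    ultimately have "(\<lambda>N. real p powr (real (k p) - real N)) \<longlonglongrightarrow> 0" by simp
    moreover have "\<delta> p > 0" using dp p by simp
    ultimately show "eventually (\<lambda>N. real p powr (real (k p) - real N) < \<delta> p) sequentially"
      by (rule order_tendstoD(2))
  qed
  hence "eventually (\<lambda>N. \<forall>p\<in>S. real p powr (real (k p) - real N) < \<delta> p) sequentially"
    by (rule eventually_ball_finite[OF fin])
  then obtain N0 where "\<forall>N\<ge>N0. \<forall>p\<in>S. real p powr (real (k p) - real N) < \<delta> p"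
    unfolding eventually_sequentially by blast
  thus ?thesis by blast
qed

lemma rat_approx:
  assumes fin: "finite S" and pr: "\<forall>p\<in>S. prime p" and dp: "\<forall>p\<in>S. \<delta> p > 0"
  shows "\<exists>q::rat. q > 0 \<and> (\<forall>p\<in>S. pabs p (q - t p) < \<delta> p) \<and> (\<forall>l. prime l \<and> l \<notin> S \<longrightarrow> pabs l q \<le> 1)"
proof -
  define den where "den p = snd (quotient_of (t p))" for p
  define num where "num p = fst (quotient_of (t p))" for p
  have denpos: "den p > 0" for p unfolding den_def by (rule quotient_of_denom_pos')
  have tnd: "t p = of_int (num p) / of_int (den p)" for p
    unfolding num_def den_def by (metis prod.collapse quotient_of_div)
  define d where "d = (\<Prod>p\<in>S. den p)"
  have dpos: "d > 0" unfolding d_def using denpos by (simp add: prod_pos)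
  define c where "c p = (d div den p) * num p" for p
  have c: "of_int (c p) = of_int d * t p" if "p \<in> S" for p
  proof -
    have "den p dvd d" unfolding d_def using that fin by (simp add: dvd_prodI)
    then obtain e where e: "d = den p * e" by blast
    show ?thesis unfolding c_def tnd e using denpos[of p] by (simp add: field_simps)
  qed
  obtain u w where uw: "d = u * w" "u > 0" "w > 0" "\<forall>p\<in>S. \<not> int p dvd w"
     "\<forall>l. prime l \<and> l \<notin> S \<longrightarrow> \<not> int l dvd u"
    using decomp_primes[OF fin pr dpos] by blast
  obtain N where N: "\<forall>p\<in>S. real p powr (real (multiplicity (int p) d) - real N) < \<delta> p"
    using exists_N[OF fin pr dp, of "\<lambda>p. multiplicity (int p) d"] by blast
  define I where "I = insert 0 S"
  define md where "md i = (if i = 0 then nat w else i ^ N)" for i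
  define rs where "rs i = (if i = 0 then 0 else nat (c i mod int (i ^ N)))" for i
  have S0: "0 \<notin> S" using pr by auto
  have cop: "\<forall>i\<in>I. \<forall>j\<in>I. i \<noteq> j \<longrightarrow> coprime (md i) (md j)"
  proof (intro ballI impI)
    fix i j assume ij: "i \<in> I" "j \<in> I" "i \<noteq> j"
    have copw: "coprime (p ^ N) (nat w)" if "p \<in> S" for p
    proof -
      have "\<not> int p dvd w" using uw(4) that by simp
      hence "\<not> p dvd nat w" using uw(3) by (metis int_nat_eq less_le_not_le of_nat_dvd_iff)
      hence "coprime p (nat w)" using prime_imp_coprime pr that by blast
      thus ?thesis by simp
    qed
    show "coprime (md i) (md j)"
    proof (cases "i = 0")
      case True
      hence "j \<in> S" using ij S0 I_def by auto
      thus ?thesis using True copw[of j] unfolding md_def using ij by (simp add: coprime_commute)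
    next
      case False
      hence iS: "i \<in> S" using ij I_def by auto
      show ?thesis
      proof (cases "j = 0")
        case True thus ?thesis using copw[OF iS] False unfolding md_def by simp
      next
        case False
        hence "j \<in> S" using ij I_def by auto
        hence "coprime i j" using primes_coprime pr iS ij(3) by blast
        thus ?thesis unfolding md_def using False \<open>i \<noteq> 0\<close> by simp
      qed
    qed
  qed
  obtain x where x: "\<forall>i\<in>I. [x = rs i] (mod md i)"
    using chinese_remainder_nat[of I md rs] fin cop I_def by auto
  define M where "M = (\<Prod>i\<in>I. md i)"
  have Mpos: "M > 0" unfolding M_def md_def using uw(3) pr by (auto intro!: prod_pos simp: prime_gt_0_nat)
  have mdM: "md i dvd M" if "i \<in> I" for i unfolding M_def using that fin I_def by (simp add: dvd_prodI)
  define m where "m = int (x + M)"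
  have mpos: "m > 0" unfolding m_def using Mpos by simp
  have xm: "[x + M = rs i] (mod md i)" if "i \<in> I" for i
  proof -
    have "[x + M = x] (mod md i)" using mdM[OF that] by (simp add: cong_add_lcancel_0_nat cong_0_iff)
    thus ?thesis using x that cong_trans by blast
  qed
  have wm: "w dvd m"
  proof -
    have "[x + M = 0] (mod nat w)" using xm[of 0] unfolding I_def md_def rs_def by simp
    hence "nat w dvd (x + M)" by (simp add: cong_0_iff)
    thus ?thesis unfolding m_def using uw(3) by (metis int_nat_eq less_le_not_le of_nat_dvd_iff)
  qed
  have pm: "int p ^ N dvd m - c p" if "p \<in> S" for p
  proof -
    have p0: "p \<noteq> 0" using that S0 by (metis)
    have "[x + M = nat (c p mod int (p ^ N))] (mod p ^ N)" using xm[of p] that p0 unfolding I_def md_def rs_def by simp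
    hence "[int (x + M) = int (nat (c p mod int (p ^ N)))] (mod int (p ^ N))" by (rule cong_int_iff[THEN iffD2])
    moreover have "int (nat (c p mod int (p ^ N))) = c p mod int (p ^ N)" using p0 by simp
    ultimately have "[m = c p mod int (p ^ N)] (mod int (p ^ N))" unfolding m_def by simp
    hence "[m = c p] (mod int (p ^ N))" by (metis cong_mod_right cong_mod_left cong_sym cong_refl)
    thus ?thesis by (simp add: cong_iff_dvd_diff)
  qed
  define q where "q = (of_int m / of_int d :: rat)"
  show ?thesis
  proof (intro exI[of _ q] conjI ballI allI impI)
    show "q > 0" unfolding q_def using mpos dpos by simp
  next
    fix p assume pS: "p \<in> S"
    have p: "prime p" using pr pS by simp
    have qt: "q - t p = of_int (m - c p) / of_int d"
      unfolding q_def using c[OF pS] dpos by (simp add: field_simps)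
    show "pabs p (q - t p) < \<delta> p"
    proof (cases "m = c p")
      case True thus ?thesis using qt dp pS by simp
    next
      case False
      hence mc: "m - c p \<noteq> 0" by simp
      have "N \<le> multiplicity (int p) (m - c p)"
        using multiplicity_geI[OF mc, of "int p" N] pm[OF pS] p prime_elem_not_unit[of "int p"] by simp
      hence "pabs p (q - t p) \<le> real p powr (real (multiplicity (int p) d) - real N)"
        unfolding qt pabs_div[OF p mc dpos[THEN less_imp_neq, symmetric]]
        using p prime_gt_1_nat[of p] by (intro powr_mono) auto
      moreover have "real p powr (real (multiplicity (int p) d) - real N) < \<delta> p" using N pS by blast
      ultimately show ?thesis by linarith
    qed
  next
    fix l assume l: "prime l \<and> l \<notin> S"
    have lp: "prime l" using l by simp
    have m0: "m \<noteq> 0" using mpos by simp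
    have "multiplicity (int l) d = multiplicity (int l) u + multiplicity (int l) w"
      unfolding uw(1) using prime_elem_multiplicity_mult_distrib[of "int l" u w] lp uw by simp
    also have "multiplicity (int l) u = 0"
    proof -
      have "\<not> int l dvd u" using uw(5) l by blast
      thus ?thesis using multiplicity_eq_zero_iff[of u "int l"] uw(2) lp prime_elem_not_unit[of "int l"] by simp
    qed
    also have "multiplicity (int l) w \<le> multiplicity (int l) m" using dvd_imp_multiplicity_le[OF wm m0] .
    finally have le: "multiplicity (int l) d \<le> multiplicity (int l) m" by simp
    have "pabs l q = real l powr (real (multiplicity (int l) d) - real (multiplicity (int l) m))"
      unfolding q_def by (rule pabs_div[OF lp m0]) (use dpos in simp)
    also have "\<dots> \<le> real l powr 0" using le lp prime_gt_1_nat[of l] by (intro powr_mono) auto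
    finally show "pabs l q \<le> 1" using lp prime_gt_0_nat[of l] by simp
  qed
qed

lemma pnorm_scale:
  assumes p: "prime p" and x: "x \<in> Qp p"
  shows "pnorm p (pclass p (\<lambda>n. q * prep x n)) = pabs p q * pnorm p x"
proof -
  have c: "pcauchy p (\<lambda>n. q * prep x n)" by (rule pcauchy_scale[OF p Qp_rep(1)[OF p x]])
  have "(\<lambda>n. pabs p q * pabs p (prep x n)) \<longlonglongrightarrow> pabs p q * pnorm p x"
    by (rule tendsto_mult_left[OF pnorm_Qp[OF p x]])
  hence "(\<lambda>n. pabs p (q * prep x n)) \<longlonglongrightarrow> pabs p q * pnorm p x" by (simp add: pabs_mult[OF p])
  thus ?thesis using pnorm_pclass[OF p c] LIMSEQ_unique by blast
qed

lemma pnorm_diff_le: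
  assumes p: "prime p" and x: "x \<in> Qp p" and y: "y \<in> Qp p"
  shows "pnorm p (pclass p (\<lambda>n. q * prep x n - prep y n)) \<le> max (pabs p q * pnorm p x) (pnorm p y)"
proof -
  have c: "pcauchy p (\<lambda>n. q * prep x n - prep y n)"
    by (intro pcauchy_diff[OF p] pcauchy_scale[OF p] Qp_rep(1)[OF p] x y)
  have l1: "(\<lambda>n. pabs p (q * prep x n)) \<longlonglongrightarrow> pabs p q * pnorm p x"
    using tendsto_mult_left[OF pnorm_Qp[OF p x], of "pabs p q"] by (simp add: pabs_mult[OF p])
  have l2: "(\<lambda>n. max (pabs p (q * prep x n)) (pabs p (prep y n))) \<longlonglongrightarrow> max (pabs p q * pnorm p x) (pnorm p y)"
    by (rule tendsto_max[OF l1 pnorm_Qp[OF p y]])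
  show ?thesis
  proof (rule LIMSEQ_le[OF pnorm_pclass[OF p c] l2], intro exI allI impI)
    fix n
    show "pabs p (q * prep x n - prep y n) \<le> max (pabs p (q * prep x n)) (pabs p (prep y n))"
      using pabs_ultra[OF p, of "q * prep x n" "- prep y n"] pabs_minus[OF p, of "prep y n"] by simp
  qed
qed

lemma pabs_divide: "prime p \<Longrightarrow> r \<noteq> 0 \<Longrightarrow> pabs p (s / r) = pabs p s / pabs p r"
proof -
  assume p: "prime p" and r: "r \<noteq> 0"
  have "pabs p s = pabs p (s / r * r)" using r by simp
  also have "\<dots> = pabs p (s / r) * pabs p r" by (rule pabs_mult[OF p])
  finally show ?thesis using pabs_pos[OF p r] by (simp add: field_simps)
qed

lemma local_approx:
  assumes p: "prime p" and x: "x \<in> Qp p" and y: "y \<in> Qp p" and xy: "x = pzero p \<longrightarrow> y = pzero p"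
    and e: "e > 0"
  shows "\<exists>t \<delta>. \<delta> > 0 \<and> (\<forall>q. pabs p (q - t) < \<delta> \<longrightarrow> pnorm p (pclass p (\<lambda>n. q * prep x n - prep y n)) < e)"
proof -
  define X where "X = prep x"
  define Y where "Y = prep y"
  have X: "pcauchy p X" and Y: "pcauchy p Y" unfolding X_def Y_def using Qp_rep(1)[OF p] x y by auto
  have c: "\<And>q. pcauchy p (\<lambda>n. q * X n - Y n)" by (intro pcauchy_diff[OF p] pcauchy_scale[OF p] X Y)
  show ?thesis
  proof (cases "x = pzero p")
    case True
    hence Xn: "(\<lambda>n. pabs p (X n)) \<longlonglongrightarrow> 0" and Yn: "(\<lambda>n. pabs p (Y n)) \<longlonglongrightarrow> 0"
      using Qp_zero_iff[OF p x] Qp_zero_iff[OF p y] xy unfolding X_def Y_def by auto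
    show ?thesis
    proof (rule exI[of _ 0], rule exI[of _ 1], intro conjI allI impI)
      fix q :: rat
      have "(\<lambda>n. pabs p q * pabs p (X n) + pabs p (Y n)) \<longlonglongrightarrow> 0"
        using tendsto_add[OF tendsto_mult_right_zero[OF Xn, of "pabs p q"] Yn] by simp
      hence "(\<lambda>n. pabs p (q * X n - Y n)) \<longlonglongrightarrow> 0"
      proof (rule Lim_null_comparison[rotated], intro always_eventually allI)
        fix n
        have "pabs p (q * X n - Y n) \<le> pabs p (q * X n) + pabs p (- Y n)"
          using pabs_tri[OF p, of "q * X n" "- Y n"] by simp
        thus "norm (pabs p (q * X n - Y n)) \<le> pabs p q * pabs p (X n) + pabs p (Y n)"
          using pabs_nonneg[of p] by (simp add: pabs_mult[OF p] pabs_minus[OF p])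
      qed
      hence "pnorm p (pclass p (\<lambda>n. q * X n - Y n)) = 0"
        using pnorm_pclass[OF p c[of q]] LIMSEQ_unique by blast
      thus "pnorm p (pclass p (\<lambda>n. q * prep x n - prep y n)) < e" using e unfolding X_def Y_def by simp
    qed simp
  next
    case False
    define \<alpha> where "\<alpha> = pnorm p x"
    have "\<alpha> \<noteq> 0" using False pclass_zero_iff_norm[OF p Qp_rep(1)[OF p x]] Qp_rep(2)[OF p x] unfolding \<alpha>_def by simp
    hence apos: "\<alpha> > 0" using pnorm_nonneg[OF p x] unfolding \<alpha>_def by simp
    have "eventually (\<lambda>n. pabs p (X n) > \<alpha>/2) sequentially"
      using order_tendstoD(1)[OF pnorm_Qp[OF p x], of "\<alpha>/2"] apos unfolding X_def \<alpha>_def by simp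
    then obtain N0 where N0: "\<forall>n\<ge>N0. pabs p (X n) > \<alpha>/2" unfolding eventually_sequentially by blast
    obtain BY where BY: "BY > 0" "\<And>n. pabs p (Y n) \<le> BY" using pcauchy_bounded[OF p Y] by blast
    define M where "M = max 1 (2 * BY / \<alpha>)"
    have Mpos: "M > 0" unfolding M_def by simp
    obtain N1 where N1: "\<forall>m\<ge>N1. \<forall>n\<ge>N1. pabs p (X m - X n) < e / (2 * M)"
      using X unfolding pcauchy_def using e Mpos by (metis divide_pos_pos mult_pos_pos zero_less_numeral)
    obtain N2 where N2: "\<forall>m\<ge>N2. \<forall>n\<ge>N2. pabs p (Y m - Y n) < e / 2"
      using Y unfolding pcauchy_def using e by (metis half_gt_zero)
    define n0 where "n0 = max N0 (max N1 N2)"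
    define r where "r = X n0"
    define s where "s = Y n0"
    have ra: "pabs p r > \<alpha>/2" unfolding r_def n0_def using N0 by simp
    hence r0: "r \<noteq> 0" using apos by (auto)
    have rpos: "pabs p r > 0" using ra apos by linarith
    have sb: "pabs p s \<le> BY" unfolding s_def by (rule BY(2))
    define t where "t = s / r"
    have tb: "pabs p t \<le> M"
    proof -
      have "pabs p t = pabs p s / pabs p r" unfolding t_def by (rule pabs_divide[OF p r0])
      also have "\<dots> \<le> BY / (\<alpha>/2)" using sb ra apos BY(1) pabs_nonneg[of p s]
        by (intro frac_le) auto
      also have "\<dots> = 2 * BY / \<alpha>" by simp
      finally show ?thesis unfolding M_def by simp
    qed
    show ?thesis
    proof (rule exI[of _ t], rule exI[of _ "min 1 ((e/2) / pabs p r)"], intro conjI allI impI)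
      show "min 1 ((e/2) / pabs p r) > 0" using e rpos by simp
      fix q assume q: "pabs p (q - t) < min 1 ((e/2) / pabs p r)"
      have qM: "pabs p q \<le> M"
      proof -
        have "pabs p q \<le> max (pabs p (q - t)) (pabs p t)" using pabs_ultra[OF p, of "q - t" t] by simp
        moreover have "pabs p (q - t) \<le> M"
        proof -
          have "pabs p (q - t) < 1" using q by simp
          moreover have "1 \<le> M" unfolding M_def by simp
          ultimately show ?thesis by linarith
        qed
        ultimately show ?thesis using tb by simp
      qed
      have b2: "pabs p (q * r - s) < e/2"
      proof -
        have "q * r - s = r * (q - t)" unfolding t_def using r0 by (simp add: field_simps)
        hence "pabs p (q * r - s) = pabs p r * pabs p (q - t)" by (simp add: pabs_mult[OF p])
        also have "\<dots> < pabs p r * ((e/2) / pabs p r)" using q rpos by (intro mult_strict_left_mono) auto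
        also have "\<dots> = e/2" using rpos by simp
        finally show ?thesis .
      qed
      have bound: "pabs p (q * X n - Y n) \<le> e/2" if n: "n \<ge> n0" for n
      proof -
        have b1: "pabs p (q * (X n - r)) \<le> e/2"
        proof -
          have "pabs p (X n - r) < e / (2 * M)" unfolding r_def using N1 n n0_def by simp
          hence "pabs p q * pabs p (X n - r) \<le> M * (e / (2 * M))"
            using qM pabs_nonneg[of p] Mpos by (intro mult_mono) auto
          also have "\<dots> = e/2" using Mpos by simp
          finally show ?thesis by (simp add: pabs_mult[OF p])
        qed
        have b3: "pabs p (s - Y n) \<le> e/2" unfolding s_def using N2 n n0_def by (simp add: less_imp_le)
        have eq: "q * X n - Y n = (q * (X n - r) + (q * r - s)) + (s - Y n)" by (simp add: algebra_simps)
        have "pabs p (q * X n - Y n) \<le> max (pabs p (q * (X n - r) + (q * r - s))) (pabs p (s - Y n))"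
          unfolding eq by (rule pabs_ultra[OF p])
        moreover have "pabs p (q * (X n - r) + (q * r - s)) \<le> max (pabs p (q * (X n - r))) (pabs p (q * r - s))"
          by (rule pabs_ultra[OF p])
        ultimately show ?thesis using b1 b2 b3 by simp
      qed
      have "pnorm p (pclass p (\<lambda>n. q * X n - Y n)) \<le> e/2"
        by (rule LIMSEQ_le_const2[OF pnorm_pclass[OF p c[of q]]]) (use bound in blast)
      thus "pnorm p (pclass p (\<lambda>n. q * prep x n - prep y n)) < e" using e unfolding X_def Y_def by simp
    qed
  qed
qed

lemma pnhd0_Zp: "pnhd0 p (Zp p)"
  unfolding pnhd0_def Zp_def by (rule exI[of _ 1]) auto

lemma pnhd0_inter: "pnhd0 p A \<Longrightarrow> pnhd0 p B \<Longrightarrow> pnhd0 p (A \<inter> B)"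
  unfolding pnhd0_def
proof -
  assume "\<exists>e>0. {x \<in> Qp p. pnorm p x < e} \<subseteq> A" "\<exists>e>0. {x \<in> Qp p. pnorm p x < e} \<subseteq> B"
  then obtain e1 e2 where e: "e1 > 0" "{x \<in> Qp p. pnorm p x < e1} \<subseteq> A" "e2 > 0" "{x \<in> Qp p. pnorm p x < e2} \<subseteq> B"
    by blast
  show "\<exists>e>0. {x \<in> Qp p. pnorm p x < e} \<subseteq> A \<inter> B"
    by (rule exI[of _ "min e1 e2"]) (use e in auto)
qed

lemma nhd_inter:
  assumes "adele_nhd0 U1" "adele_nhd0 U2"
  shows "\<exists>U. adele_nhd0 U \<and> U \<subseteq> U1 \<inter> U2"
proof -
  obtain F1 V1 where 1: "finite F1" "\<forall>p\<in>F1. prime p \<and> pnhd0 p (V1 p)"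
    "U1 = {x \<in> finite_adeles. \<forall>p. prime p \<longrightarrow> x p \<in> (if p \<in> F1 then V1 p else Zp p)}"
    using assms(1) unfolding adele_nhd0_def by blast
  obtain F2 V2 where 2: "finite F2" "\<forall>p\<in>F2. prime p \<and> pnhd0 p (V2 p)"
    "U2 = {x \<in> finite_adeles. \<forall>p. prime p \<longrightarrow> x p \<in> (if p \<in> F2 then V2 p else Zp p)}"
    using assms(2) unfolding adele_nhd0_def by blast
  define V where "V p = (if p \<in> F1 then V1 p else Zp p) \<inter> (if p \<in> F2 then V2 p else Zp p)" for p
  define U where "U = {x \<in> finite_adeles. \<forall>p. prime p \<longrightarrow> x p \<in> (if p \<in> F1 \<union> F2 then V p else Zp p)}"
  have "adele_nhd0 U"
    unfolding adele_nhd0_def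
  proof (rule exI[of _ "F1 \<union> F2"], rule exI[of _ V], intro conjI)
    show "finite (F1 \<union> F2)" using 1 2 by simp
    show "\<forall>p\<in>F1 \<union> F2. prime p \<and> pnhd0 p (V p)"
    proof
      fix p assume p: "p \<in> F1 \<union> F2"
      have "pnhd0 p (if p \<in> F1 then V1 p else Zp p)" using 1 pnhd0_Zp by auto
      moreover have "pnhd0 p (if p \<in> F2 then V2 p else Zp p)" using 2 pnhd0_Zp by auto
      ultimately have "pnhd0 p (V p)" unfolding V_def by (rule pnhd0_inter)
      thus "prime p \<and> pnhd0 p (V p)" using p 1 2 by auto
    qed
    show "U = {x \<in> finite_adeles. \<forall>p. prime p \<longrightarrow> x p \<in> (if p \<in> F1 \<union> F2 then V p else Zp p)}"
      unfolding U_def ..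
  qed
  moreover have "U \<subseteq> U1 \<inter> U2"
    unfolding U_def 1(3) 2(3) V_def by (auto split: if_splits)
  ultimately show ?thesis by blast
qed

definition adeleP :: "(nat \<Rightarrow> padic) set \<Rightarrow> bool" where
  "adeleP = (\<lambda>W. W \<subseteq> finite_adeles \<and>
      (\<forall>x\<in>W. \<exists>U. adele_nhd0 U \<and> {y \<in> finite_adeles. adele_sub y x \<in> U} \<subseteq> W))"

lemma istopology_adeleP: "istopology adeleP"
  unfolding istopology_def
proof (intro conjI allI impI)
  fix S T assume S: "adeleP S" and T: "adeleP T"
  show "adeleP (S \<inter> T)"
    unfolding adeleP_def
  proof (intro conjI ballI)
    show "S \<inter> T \<subseteq> finite_adeles" using S unfolding adeleP_def by blast
    fix x assume x: "x \<in> S \<inter> T"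
    obtain U1 where U1: "adele_nhd0 U1" "{y \<in> finite_adeles. adele_sub y x \<in> U1} \<subseteq> S"
      using S x unfolding adeleP_def by blast
    obtain U2 where U2: "adele_nhd0 U2" "{y \<in> finite_adeles. adele_sub y x \<in> U2} \<subseteq> T"
      using T x unfolding adeleP_def by blast
    obtain U where U: "adele_nhd0 U" "U \<subseteq> U1 \<inter> U2" using nhd_inter[OF U1(1) U2(1)] by blast
    show "\<exists>U. adele_nhd0 U \<and> {y \<in> finite_adeles. adele_sub y x \<in> U} \<subseteq> S \<inter> T"
      using U U1 U2 by blast
  qed
next
  fix K assume K: "\<forall>W\<in>K. adeleP W"
  show "adeleP (\<Union>K)"
    unfolding adeleP_def
  proof (intro conjI ballI)
    show "\<Union>K \<subseteq> finite_adeles" using K unfolding adeleP_def by blast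
    fix x assume "x \<in> \<Union>K"
    then obtain W where W: "W \<in> K" "x \<in> W" by blast
    then obtain U where "adele_nhd0 U" "{y \<in> finite_adeles. adele_sub y x \<in> U} \<subseteq> W"
      using K unfolding adeleP_def by blast
    thus "\<exists>U. adele_nhd0 U \<and> {y \<in> finite_adeles. adele_sub y x \<in> U} \<subseteq> \<Union>K" using W by blast
  qed
qed

lemma openin_adele: "openin adele_topology W \<longleftrightarrow> adeleP W"
proof -
  have "adele_topology = topology adeleP" unfolding adele_topology_def adeleP_def ..
  hence "openin adele_topology = adeleP" using topology_inverse'[OF istopology_adeleP] by simp
  thus ?thesis by simp
qed

lemma nhd0_trivial: "adele_nhd0 {x \<in> finite_adeles. \<forall>p. prime p \<longrightarrow> x p \<in> Zp p}"
  unfolding adele_nhd0_def by (rule exI[of _ "{}"]) auto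

lemma topspace_adele: "topspace adele_topology = finite_adeles"
proof
  show "topspace adele_topology \<subseteq> finite_adeles"
    unfolding topspace_def openin_adele adeleP_def by blast
  have "adeleP finite_adeles" unfolding adeleP_def using nhd0_trivial by blast
  hence "openin adele_topology finite_adeles" using openin_adele by simp
  thus "finite_adeles \<subseteq> topspace adele_topology" by (rule openin_subset)
qed

lemma pzero_in: "prime p \<Longrightarrow> pzero p \<in> Qp p"
  unfolding pzero_def by (rule pclass_in(1)) (auto simp: pcauchy_const)

lemma scale_pzero:
  assumes p: "prime p"
  shows "pmul p (pof_rat p q) (pzero p) = pzero p"
proof -
  have z: "(\<lambda>n. pabs p (prep (pzero p) n)) \<longlonglongrightarrow> 0" using Qp_zero_iff[OF p pzero_in[OF p]] by simp
  have "(\<lambda>n. pabs p (q * prep (pzero p) n)) \<longlonglongrightarrow> 0"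
    using tendsto_mult_right_zero[OF z, of "pabs p q"] by (simp add: pabs_mult[OF p])
  hence "pclass p (\<lambda>n. q * prep (pzero p) n) = pzero p"
    using pclass_zero_iff[OF p pcauchy_scale[OF p Qp_rep(1)[OF p pzero_in[OF p]]]] by simp
  thus ?thesis using pmul_pof_rat[OF p pzero_in[OF p]] by simp
qed

lemma T_open:
  assumes p: "prime p"
  shows "openin adele_topology {y \<in> finite_adeles. y p \<noteq> pzero p}"
  unfolding openin_adele adeleP_def
proof (intro conjI ballI)
  show "{y \<in> finite_adeles. y p \<noteq> pzero p} \<subseteq> finite_adeles" by blast
  fix y assume y: "y \<in> {y \<in> finite_adeles. y p \<noteq> pzero p}"
  have yp: "y p \<in> Qp p" using y p unfolding finite_adeles_def by auto
  define \<rho> where "\<rho> = pnorm p (y p)"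
  have "\<rho> \<noteq> 0" using y pclass_zero_iff_norm[OF p Qp_rep(1)[OF p yp]] Qp_rep(2)[OF p yp] unfolding \<rho>_def by simp
  hence rho: "\<rho> > 0" using pnorm_nonneg[OF p yp] unfolding \<rho>_def by simp
  define V where "V = (\<lambda>_::nat. {z \<in> Qp p. pnorm p z < \<rho>})"
  define U where "U = {x \<in> finite_adeles. \<forall>p'. prime p' \<longrightarrow> x p' \<in> (if p' \<in> {p} then V p' else Zp p')}"
  have U: "adele_nhd0 U" unfolding adele_nhd0_def U_def
    by (rule exI[of _ "{p}"], rule exI[of _ V]) (use p rho in \<open>auto simp: pnhd0_def V_def\<close>)
  have "{w \<in> finite_adeles. adele_sub w y \<in> U} \<subseteq> {y \<in> finite_adeles. y p \<noteq> pzero p}"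
  proof (safe)
    fix w assume w: "w \<in> finite_adeles" "adele_sub w y \<in> U" and wp: "w p = pzero p"
    have "pnorm p (psub p (w p) (y p)) < \<rho>" using w(2) p unfolding U_def V_def adele_sub_def by auto
    moreover have "psub p (w p) (y p) = pclass p (\<lambda>n. 0 - prep (y p) n)"
      unfolding wp pzero_def by (rule psub_pclass[OF p pcauchy_const yp])
    moreover have "pnorm p (pclass p (\<lambda>n. 0 - prep (y p) n)) = \<rho>"
    proof -
      have c: "pcauchy p (\<lambda>n. 0 - prep (y p) n)" by (intro pcauchy_diff[OF p] pcauchy_const Qp_rep(1)[OF p yp])
      have "(\<lambda>n. pabs p (0 - prep (y p) n)) \<longlonglongrightarrow> \<rho>" using pnorm_Qp[OF p yp] unfolding \<rho>_def
        by (simp add: pabs_minus[OF p])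
      thus ?thesis using pnorm_pclass[OF p c] LIMSEQ_unique by blast
    qed
    ultimately show False by simp
  qed
  thus "\<exists>U. adele_nhd0 U \<and> {w \<in> finite_adeles. adele_sub w y \<in> U} \<subseteq> {y \<in> finite_adeles. y p \<noteq> pzero p}"
    using U by blast
qed

theorem lemma2p3:
  assumes "a \<in> finite_adeles"
  shows "adele_topology closure_of {adele_scale q a | q :: rat. q > 0}
         = {b \<in> finite_adeles. \<forall>p. prime p \<longrightarrow> a p = pzero p \<longrightarrow> b p = pzero p}"
proof
  have aQ: "\<And>p. prime p \<Longrightarrow> a p \<in> Qp p" using assms unfolding finite_adeles_def by auto
  show "adele_topology closure_of {adele_scale q a | q :: rat. q > 0}
         \<subseteq> {b \<in> finite_adeles. \<forall>p. prime p \<longrightarrow> a p = pzero p \<longrightarrow> b p = pzero p}"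
  proof
    fix x assume x: "x \<in> adele_topology closure_of {adele_scale q a | q :: rat. q > 0}"
    hence xA: "x \<in> finite_adeles" and xc: "\<forall>T. x \<in> T \<and> openin adele_topology T \<longrightarrow>
        (\<exists>y. y \<in> {adele_scale q a | q :: rat. q > 0} \<and> y \<in> T)"
      unfolding in_closure_of topspace_adele by simp_all
    have "x p = pzero p" if p: "prime p" and ap: "a p = pzero p" for p
    proof (rule ccontr)
      assume "x p \<noteq> pzero p"
      hence xT: "x \<in> {y \<in> finite_adeles. y p \<noteq> pzero p}" using xA by simp
      have "\<exists>y. y \<in> {adele_scale q a | q :: rat. q > 0} \<and> y \<in> {y \<in> finite_adeles. y p \<noteq> pzero p}"
        using xc[rule_format, OF conjI[OF xT T_open[OF p]]] .
      then obtain y where y: "y \<in> {adele_scale q a | q :: rat. q > 0}" "y \<in> {y \<in> finite_adeles. y p \<noteq> pzero p}"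
        by blast
      from y(1) obtain q where "y = adele_scale q a" by blast
      hence "y p = pzero p" using p ap scale_pzero[OF p] unfolding adele_scale_def by simp
      thus False using y(2) by simp
    qed
    thus "x \<in> {b \<in> finite_adeles. \<forall>p. prime p \<longrightarrow> a p = pzero p \<longrightarrow> b p = pzero p}" using xA by blast
  qed
  show "{b \<in> finite_adeles. \<forall>p. prime p \<longrightarrow> a p = pzero p \<longrightarrow> b p = pzero p}
         \<subseteq> adele_topology closure_of {adele_scale q a | q :: rat. q > 0}"
  proof
    fix b assume b: "b \<in> {b \<in> finite_adeles. \<forall>p. prime p \<longrightarrow> a p = pzero p \<longrightarrow> b p = pzero p}"
    have bA: "b \<in> finite_adeles" and bz: "\<And>p. prime p \<Longrightarrow> a p = pzero p \<Longrightarrow> b p = pzero p" using b by auto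
    have bQ: "\<And>p. prime p \<Longrightarrow> b p \<in> Qp p" using bA unfolding finite_adeles_def by auto
    show "b \<in> adele_topology closure_of {adele_scale q a | q :: rat. q > 0}"
      unfolding in_closure_of topspace_adele
    proof (intro conjI allI impI bA)
      fix T assume T: "b \<in> T \<and> openin adele_topology T"
      obtain U where U: "adele_nhd0 U" "{y \<in> finite_adeles. adele_sub y b \<in> U} \<subseteq> T"
        using T unfolding openin_adele adeleP_def by blast
      obtain F V where FV: "finite F" "\<forall>p\<in>F. prime p \<and> pnhd0 p (V p)"
        "U = {x \<in> finite_adeles. \<forall>p. prime p \<longrightarrow> x p \<in> (if p \<in> F then V p else Zp p)}"
        using U(1) unfolding adele_nhd0_def by blast
      define S where "S = F \<union> {p. prime p \<and> a p \<notin> Zp p} \<union> {p. prime p \<and> b p \<notin> Zp p}"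
      have fa: "finite {p. prime p \<and> a p \<notin> Zp p}" using assms unfolding finite_adeles_def by blast
      have fb: "finite {p. prime p \<and> b p \<notin> Zp p}" using bA unfolding finite_adeles_def by blast
      have finS: "finite S" unfolding S_def using FV(1) fa fb by simp
      have prS: "\<forall>p\<in>S. prime p" unfolding S_def using FV(2) by auto
      have ex: "\<forall>p\<in>S. \<exists>e>0. {z \<in> Qp p. pnorm p z < e} \<subseteq> (if p \<in> F then V p else Zp p)"
      proof
        fix p assume "p \<in> S"
        show "\<exists>e>0. {z \<in> Qp p. pnorm p z < e} \<subseteq> (if p \<in> F then V p else Zp p)"
        proof (cases "p \<in> F")
          case True thus ?thesis using FV(2) unfolding pnhd0_def by auto
        next
          case False thus ?thesis using pnhd0_Zp[of p] unfolding pnhd0_def by auto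
        qed
      qed
      obtain e where e: "\<forall>p\<in>S. e p > 0 \<and> {z \<in> Qp p. pnorm p z < e p} \<subseteq> (if p \<in> F then V p else Zp p)"
        using bchoice[OF ex] by blast
      have ex2: "\<forall>p\<in>S. \<exists>t \<delta>. \<delta> > 0 \<and> (\<forall>q. pabs p (q - t) < \<delta> \<longrightarrow>
          pnorm p (pclass p (\<lambda>n. q * prep (a p) n - prep (b p) n)) < e p)"
      proof
        fix p assume pS: "p \<in> S"
        have p: "prime p" using prS pS by simp
        show "\<exists>t \<delta>. \<delta> > 0 \<and> (\<forall>q. pabs p (q - t) < \<delta> \<longrightarrow>
          pnorm p (pclass p (\<lambda>n. q * prep (a p) n - prep (b p) n)) < e p)"
        proof (rule local_approx[OF p aQ[OF p] bQ[OF p]])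
          show "a p = pzero p \<longrightarrow> b p = pzero p" using bz[OF p] by blast
          show "e p > 0" using e pS by blast
        qed
      qed
      obtain t where ex3: "\<forall>p\<in>S. \<exists>\<delta>. \<delta> > 0 \<and> (\<forall>q. pabs p (q - t p) < \<delta> \<longrightarrow>
          pnorm p (pclass p (\<lambda>n. q * prep (a p) n - prep (b p) n)) < e p)" using bchoice[OF ex2] by blast
      obtain \<delta> where td: "\<forall>p\<in>S. \<delta> p > 0 \<and> (\<forall>q. pabs p (q - t p) < \<delta> p \<longrightarrow>
          pnorm p (pclass p (\<lambda>n. q * prep (a p) n - prep (b p) n)) < e p)" using bchoice[OF ex3] by blast
      obtain q :: rat where q: "q > 0" "\<forall>p\<in>S. pabs p (q - t p) < \<delta> p" "\<forall>l. prime l \<and> l \<notin> S \<longrightarrow> pabs l q \<le> 1"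
        using rat_approx[OF finS prS, of \<delta> t] td by auto
      define y where "y = adele_scale q a"
      define D where "D p = pclass p (\<lambda>n. q * prep (a p) n - prep (b p) n)" for p
      have yp: "y p = pclass p (\<lambda>n. q * prep (a p) n)" if p: "prime p" for p
        unfolding y_def adele_scale_def using p pmul_pof_rat[OF p aQ[OF p]] by simp
      have Dp: "adele_sub y b p = D p" if p: "prime p" for p
        unfolding adele_sub_def D_def using p yp[OF p]
          psub_pclass[OF p pcauchy_scale[OF p Qp_rep(1)[OF p aQ[OF p]]] bQ[OF p]] by simp
      have DQ: "D p \<in> Qp p" if p: "prime p" for p
        unfolding D_def by (intro pclass_in(1)[OF p] pcauchy_diff[OF p] pcauchy_scale[OF p] Qp_rep(1)[OF p] aQ[OF p] bQ[OF p])
      have yQ: "y p \<in> Qp p" if p: "prime p" for p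
        unfolding yp[OF p] by (intro pclass_in(1)[OF p] pcauchy_scale[OF p] Qp_rep(1)[OF p] aQ[OF p])
      have outside: "y p \<in> Zp p \<and> D p \<in> Zp p" if p: "prime p" and pS: "p \<notin> S" for p
      proof -
        have az: "pnorm p (a p) \<le> 1" using pS p aQ[OF p] unfolding S_def Zp_def by auto
        have bzz: "pnorm p (b p) \<le> 1" using pS p bQ[OF p] unfolding S_def Zp_def by auto
        have ql: "pabs p q \<le> 1" using q(3) p pS by blast
        have an: "pnorm p (a p) \<ge> 0" by (rule pnorm_nonneg[OF p aQ[OF p]])
        have qa: "pabs p q * pnorm p (a p) \<le> 1" using az ql an pabs_nonneg[of p q] by (simp add: mult_le_one)
        have "pnorm p (y p) \<le> 1" unfolding yp[OF p] pnorm_scale[OF p aQ[OF p]] by (rule qa)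
        moreover have "pnorm p (D p) \<le> 1" unfolding D_def
          using pnorm_diff_le[OF p aQ[OF p] bQ[OF p], of q] qa bzz by simp
        ultimately show ?thesis using yQ[OF p] DQ[OF p] unfolding Zp_def by simp
      qed
      have yA: "y \<in> finite_adeles"
        unfolding finite_adeles_def
      proof (intro CollectI conjI allI impI)
        fix p :: nat assume "prime p" thus "y p \<in> Qp p" by (rule yQ)
      next
        fix p :: nat assume "\<not> prime p" thus "y p = {}" unfolding y_def adele_scale_def by simp
      next
        have "{p. prime p \<and> y p \<notin> Zp p} \<subseteq> S" using outside by blast
        thus "finite {p. prime p \<and> y p \<notin> Zp p}" using finS finite_subset by blast
      qed
      have sA: "adele_sub y b \<in> finite_adeles"
        unfolding finite_adeles_def
      proof (intro CollectI conjI allI impI)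
        fix p :: nat assume "prime p" thus "adele_sub y b p \<in> Qp p" using Dp DQ by simp
      next
        fix p :: nat assume "\<not> prime p" thus "adele_sub y b p = {}" unfolding adele_sub_def by simp
      next
        have "{p. prime p \<and> adele_sub y b p \<notin> Zp p} \<subseteq> S"
        proof
          fix p assume "p \<in> {p. prime p \<and> adele_sub y b p \<notin> Zp p}"
          hence p: "prime p" and nz: "adele_sub y b p \<notin> Zp p" by auto
          show "p \<in> S"
          proof (rule ccontr)
            assume "p \<notin> S" thus False using outside[OF p] Dp[OF p] nz by simp
          qed
        qed
        thus "finite {p. prime p \<and> adele_sub y b p \<notin> Zp p}" using finS finite_subset by blast
      qed
      have "adele_sub y b \<in> U"
        unfolding FV(3)
      proof (intro CollectI conjI allI impI sA)
        fix p :: nat assume p: "prime p"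
        show "adele_sub y b p \<in> (if p \<in> F then V p else Zp p)"
        proof (cases "p \<in> S")
          case True
          have "pnorm p (D p) < e p" unfolding D_def using td q(2) True by blast
          hence "D p \<in> {z \<in> Qp p. pnorm p z < e p}" using DQ[OF p] by simp
          moreover have "{z \<in> Qp p. pnorm p z < e p} \<subseteq> (if p \<in> F then V p else Zp p)" using e True by blast
          ultimately show ?thesis unfolding Dp[OF p] by (rule subsetD[rotated])
        next
          case False
          hence "p \<notin> F" unfolding S_def by simp
          thus ?thesis using outside[OF p False] Dp[OF p] by simp
        qed
      qed
      hence "y \<in> T" using U(2) yA by blast
      moreover have "y \<in> {adele_scale q a | q :: rat. q > 0}" unfolding y_def using q(1) by blast
      ultimately show "\<exists>y. y \<in> {adele_scale q a | q :: rat. q > 0} \<and> y \<in> T" by blast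
    qed
  qed
qed

end
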